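(* Consider a $2\times N$ switch with traffic pattern consisting of one broadcast flow $(1,[N])$ from input 1 and, for each $i\in[N]$, a unicast flow $(2,\{i\})$ from input 2 to output $i$. The enhanced conflict graph of this traffic pattern is perfect.
   Context: A flow is $(i,J)$ with input $i$ and fanout $J$; its subflows are $(i,J,j)$, $j\in J$. Enhanced conflict graph: one vertex per subflow; distinct subflows $(i,J,j),(i',J',j')$ adjacent iff $j=j'$, or $i=i'$ and $J\ne J'$. A graph is perfect if in every induced subgraph the clique number equals the chromatic number. *)

theory Defs
  imports Main
begin

text \<open>Flows (input, fanout) and subflows (input, fanout, output).\<close>
type_synonym flow = "nat \<times> nat set"
type_synonym subflow = "nat \<times> nat set \<times> nat"

definition subflows :: "flow set \<Rightarrow> subflow set" where
  "subflows F = {(i, J, j). (i, J) \<in> F \<and> j \<in> J}"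

definition ecg_adj :: "subflow \<Rightarrow> subflow \<Rightarrow> bool" where
  "ecg_adj s t \<longleftrightarrow> s \<noteq> t \<and>
     (snd (snd s) = snd (snd t) \<or> (fst s = fst t \<and> fst (snd s) \<noteq> fst (snd t)))"

definition is_clique :: "('a \<Rightarrow> 'a \<Rightarrow> bool) \<Rightarrow> 'a set \<Rightarrow> bool" where
  "is_clique E K \<longleftrightarrow> (\<forall>x\<in>K. \<forall>y\<in>K. x \<noteq> y \<longrightarrow> E x y)"

definition clique_number :: "('a \<Rightarrow> 'a \<Rightarrow> bool) \<Rightarrow> 'a set \<Rightarrow> nat" where
  "clique_number E V = Max {card K | K. K \<subseteq> V \<and> is_clique E K}"

definition proper_colouring :: "('a \<Rightarrow> 'a \<Rightarrow> bool) \<Rightarrow> 'a set \<Rightarrow> nat \<Rightarrow> ('a \<Rightarrow> nat) \<Rightarrow> bool" where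
  "proper_colouring E V k c \<longleftrightarrow>
     (\<forall>x\<in>V. c x < k) \<and> (\<forall>x\<in>V. \<forall>y\<in>V. x \<noteq> y \<and> E x y \<longrightarrow> c x \<noteq> c y)"

definition chromatic_number :: "('a \<Rightarrow> 'a \<Rightarrow> bool) \<Rightarrow> 'a set \<Rightarrow> nat" where
  "chromatic_number E V = (LEAST k. \<exists>c. proper_colouring E V k c)"

definition perfect :: "('a \<Rightarrow> 'a \<Rightarrow> bool) \<Rightarrow> 'a set \<Rightarrow> bool" where
  "perfect E V \<longleftrightarrow> finite V \<and> (\<forall>S\<subseteq>V. clique_number E S = chromatic_number E S)"

end

theory Submission
  imports Defs
begin

lemma clique_le_colours:
  assumes "finite S" "K \<subseteq> S" "is_clique E K" "proper_colouring E S k c"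
  shows "card K \<le> k"
proof -
  have inj: "inj_on c K" using assms unfolding inj_on_def is_clique_def proper_colouring_def by blast
  have sub: "c ` K \<subseteq> {..<k}" using assms unfolding proper_colouring_def by auto
  have "card K = card (c ` K)" using inj by (simp add: card_image)
  also have "\<dots> \<le> card {..<k}" using sub by (intro card_mono) auto
  finally show ?thesis by simp
qed

lemma omega_chi:
  assumes "finite S" "K \<subseteq> S" "is_clique E K" "card K = k" "proper_colouring E S k c"
  shows "clique_number E S = k \<and> chromatic_number E S = k"
proof
  let ?A = "{card K | K. K \<subseteq> S \<and> is_clique E K}"
  have le: "\<forall>y\<in>?A. y \<le> k" using clique_le_colours assms by blast
  have "finite ?A" by (rule finite_subset[of _ "{..k}"]) (use le in auto)
  moreover have "k \<in> ?A" using assms by blast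
  ultimately show "clique_number E S = k" unfolding clique_number_def using le by (intro Max_eqI) auto
next
  show "chromatic_number E S = k" unfolding chromatic_number_def
  proof (rule Least_equality)
    show "\<exists>c. proper_colouring E S k c" using assms by blast
  next
    fix y assume "\<exists>c. proper_colouring E S y c"
    then obtain c' where "proper_colouring E S y c'" by blast
    then show "k \<le> y" using clique_le_colours assms by metis
  qed
qed

lemma adj_aa: "ecg_adj (i,A,j) (i,A,j') = False" by (simp add: ecg_adj_def)
lemma adj_bb: "ecg_adj (2,{j},j) (2,{j'},j') = (j \<noteq> j')" by (auto simp add: ecg_adj_def)
lemma adj_diff: "i \<noteq> i' \<Longrightarrow> ecg_adj (i,A,j) (i',B,j') = (j = j')" by (auto simp add: ecg_adj_def)

lemma adj_sym: "ecg_adj x y \<Longrightarrow> ecg_adj y x" by (auto simp add: ecg_adj_def)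

theorem theorem7:
  fixes N :: nat
  assumes "1 \<le> N"
  shows "perfect ecg_adj (subflows ({(1, {1..N})} \<union> {(2, {i}) | i. i \<in> {1..N}}))"
proof -
  define V where "V = subflows ({(1, {1..N})} \<union> {(2, {i}) | i. i \<in> {1..N}})"
  have Vc: "\<And>x. x \<in> V \<Longrightarrow> (\<exists>j. x = (1,{1..N},j)) \<or> (\<exists>j. x = (2,{j},j) \<and> j \<in> {1..N})"
    unfolding V_def subflows_def by auto
  have fin: "finite V"
  proof -
    have "V \<subseteq> (\<lambda>j. (1::nat,{1..N},j)) ` {1..N} \<union> (\<lambda>j. (2::nat,{j},j)) ` {1..N}"
      unfolding V_def subflows_def by auto
    then show ?thesis by (rule finite_subset) auto
  qed
  have "clique_number ecg_adj S = chromatic_number ecg_adj S" if SV: "S \<subseteq> V" for S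
  proof -
    have finS: "finite S" using SV fin finite_subset by blast
    show ?thesis
    proof (cases "\<exists>x\<in>S. \<exists>y\<in>S. x \<noteq> y \<and> ecg_adj x y")
      case False
      show ?thesis
      proof (cases "S = {}")
        case True
        have "proper_colouring ecg_adj S 0 (\<lambda>_. 0)" using True by (simp add: proper_colouring_def)
        moreover have "is_clique ecg_adj {}" by (simp add: is_clique_def)
        ultimately show ?thesis using omega_chi[of S "{}" ecg_adj 0] finS by auto
      next
        case ne: False
        then obtain x where x: "x \<in> S" by blast
        have "proper_colouring ecg_adj S 1 (\<lambda>_. 0)" using False by (auto simp add: proper_colouring_def)
        moreover have "is_clique ecg_adj {x}" by (simp add: is_clique_def)
        ultimately show ?thesis using omega_chi[of S "{x}" ecg_adj 1] finS x by auto
      qed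
    next
      case True
      then obtain x y where xy: "x \<in> S" "y \<in> S" "x \<noteq> y" "ecg_adj x y" by blast
      define Bj where "Bj = {j. (2::nat,{j},j) \<in> S}"
      have finB: "finite Bj"
      proof -
        have "Bj \<subseteq> {1..N}" unfolding Bj_def using SV Vc by fastforce
        then show ?thesis using finite_subset by blast
      qed
      define m where "m = card Bj"
      obtain f where f: "bij_betw f Bj {0..<m}" using ex_bij_betw_finite_nat[OF finB] m_def by blast
      define k where "k = max m 2"
      define c where "c = (\<lambda>(i::nat,J::nat set,j::nat). if i = 2 then f j else if j \<in> Bj then (f j + 1) mod k else 0)"
      have fr: "j \<in> Bj \<Longrightarrow> f j < m" for j using f by (auto simp: bij_betw_def)
      have finj: "inj_on f Bj" using f by (auto simp: bij_betw_def)
      have col: "proper_colouring ecg_adj S k c"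
        unfolding proper_colouring_def
      proof (intro conjI ballI impI)
        fix z assume z: "z \<in> S"
        then have "z \<in> V" using SV by blast
        then show "c z < k" using Vc[of z] z fr unfolding c_def k_def Bj_def by (fastforce simp: less_max_iff_disj)
      next
        fix z w assume zw: "z \<in> S" "w \<in> S" "z \<noteq> w \<and> ecg_adj z w"
        have z: "(\<exists>j. z = (1,{1..N},j)) \<or> (\<exists>j. z = (2,{j},j) \<and> j \<in> {1..N})" using Vc SV zw by blast
        have w: "(\<exists>j. w = (1,{1..N},j)) \<or> (\<exists>j. w = (2,{j},j) \<and> j \<in> {1..N})" using Vc SV zw by blast
        have k2: "k \<ge> 2" unfolding k_def by simp
        have mk: "m \<le> k" unfolding k_def by simp
        have key: "(f j + 1) mod k \<noteq> f j" if "j \<in> Bj" for j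
        proof -
          have "f j < k" using fr[OF that] mk by simp
          then show ?thesis using k2
          proof (cases "f j + 1 < k")
            case False
            then have "f j + 1 = k" using \<open>f j < k\<close> by simp
            then show ?thesis using k2 by simp
          qed simp
        qed
        from z w zw show "c z \<noteq> c w"
        proof (elim disjE exE conjE)
          fix j j' assume "z = (1,{1..N},j)" "w = (1,{1..N},j')"
          then show ?thesis using zw adj_aa[of _ "{1..N}" j j'] by metis
        next
          fix j j' assume a: "z = (1,{1..N},j)" "w = (2,{j'},j')"
          then have jj: "j = j'" using zw adj_diff[of 1 2 "{1..N}" j "{j'}" j'] adj_diff[of 2 1 "{j}" j "{1..N}" j'] by auto
          then have "j \<in> Bj" using a zw by (auto simp: Bj_def)
          then show ?thesis using a key jj unfolding c_def by auto
        next
          fix j j' assume a: "z = (2,{j},j)" "w = (1,{1..N},j')"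
          then have jj: "j = j'" using zw adj_diff[of 1 2 "{1..N}" j "{j'}" j'] adj_diff[of 2 1 "{j}" j "{1..N}" j'] by auto
          then have "j \<in> Bj" using a zw by (auto simp: Bj_def)
          then show ?thesis using a key jj unfolding c_def by (auto dest: sym)
        next
          fix j j' assume a: "z = (2,{j},j)" "w = (2,{j'},j')"
          then have "j \<noteq> j'" "j \<in> Bj" "j' \<in> Bj" using zw by (auto simp: Bj_def)
          then show ?thesis using a finj unfolding c_def inj_on_def by auto
        qed
      qed
      show ?thesis
      proof (cases "m \<ge> 2")
        case True
        define K where "K = (\<lambda>j. (2::nat,{j},j)) ` Bj"
        have KS: "K \<subseteq> S" unfolding K_def Bj_def by auto
        have Kc: "is_clique ecg_adj K" unfolding K_def is_clique_def by (auto simp: adj_bb)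
        have "card K = m" unfolding K_def m_def by (rule card_image) (auto simp: inj_on_def)
        then have "card K = k" using True k_def by simp
        show ?thesis using omega_chi[OF finS KS Kc \<open>card K = k\<close> col] by simp
      next
        case False
        have a1: "{x,y} \<subseteq> S" using xy by auto
        have a2: "is_clique ecg_adj {x,y}" using xy adj_sym unfolding is_clique_def by auto
        have a3: "card {x,y} = k" using xy False unfolding k_def by auto
        show ?thesis using omega_chi[OF finS a1 a2 a3 col] by simp
      qed
    qed
  qed
  then show ?thesis unfolding perfect_def V_def[symmetric] using fin by blast
qed

end
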